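(* Let ${\mathscr X}$ be a Hausdorff space and ${\mathscr A}$ a set of finite Borel partitions of ${\mathscr X}$, directed under refinement, that resolves ${\mathscr X}$. For any Borel probability measures $P,Q$ on ${\mathscr X}$ with $P\ll Q$ and any $L>0$, $$\|P-P\wedge LQ\|_{1}=\sup_{\alpha\in{\mathscr A}}\|P_\alpha-P_\alpha\wedge LQ_\alpha\|_{1,\alpha}=\sup_{\alpha\in{\mathscr A}}\sum_{A\in\alpha}\bigl(P(A)-LQ(A)\bigr)_+ .$$
   Context: Partitions, refinement order and "resolves" are as usual: a partition is a finite collection of non-empty disjoint Borel sets covering ${\mathscr X}$; ${\mathscr A}$ resolves ${\mathscr X}$ if the sets in its partitions generate the Borel $\sigma$-algebra. For measures $\mu,\nu$, $\mu\wedge\nu$ is the largest measure dominated by both (so $\|P-P\wedge LQ\|_1=\int (p-L)_+\,dQ$ with $p=dP/dQ$). For histograms $P_\alpha=(P(A))_{A\in\alpha}$, $Q_\alpha=(Q(A))_{A\in\alpha}$, $P_\alpha\wedge LQ_\alpha$ is the componentwise minimum and $\|\cdot\|_{1,\alpha}$ is the $\ell^1$-norm over $A\in\alpha$. *)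

theory Defs
  imports "HOL-Probability.Probability"
begin

definition borel_partition :: "'a::topological_space set set \<Rightarrow> bool" where
  "borel_partition \<alpha> \<longleftrightarrow> finite \<alpha> \<and> (\<forall>A\<in>\<alpha>. A \<in> sets borel \<and> A \<noteq> {}) \<and>
     disjoint \<alpha> \<and> \<Union>\<alpha> = UNIV"

definition refines :: "'a set set \<Rightarrow> 'a set set \<Rightarrow> bool" where
  "refines \<beta> \<alpha> \<longleftrightarrow> (\<forall>B\<in>\<beta>. \<exists>A\<in>\<alpha>. B \<subseteq> A)"

definition directed_refinement :: "'a set set set \<Rightarrow> bool" where
  "directed_refinement \<A> \<longleftrightarrow> \<A> \<noteq> {} \<and>
     (\<forall>\<alpha>\<in>\<A>. \<forall>\<beta>\<in>\<A>. \<exists>\<gamma>\<in>\<A>. refines \<gamma> \<alpha> \<and> refines \<gamma> \<beta>)"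

definition resolves :: "'a::topological_space set set set \<Rightarrow> bool" where
  "resolves \<A> \<longleftrightarrow> sigma_sets UNIV (\<Union>\<A>) = sets borel"

text \<open>\<open>\<parallel>P - P \<and> L Q\<parallel>\<^sub>1 = \<integral> (p - L)\<^sub>+ dQ\<close> with \<open>p = dP/dQ\<close>.\<close>
definition meet_defect :: "'a measure \<Rightarrow> 'a measure \<Rightarrow> real \<Rightarrow> ennreal" where
  "meet_defect P Q L = (\<integral>\<^sup>+ x. ennreal (max 0 (enn2real (RN_deriv Q P x) - L)) \<partial>Q)"

definition hist_meet_defect :: "'a measure \<Rightarrow> 'a measure \<Rightarrow> real \<Rightarrow> 'a set set \<Rightarrow> real" where
  "hist_meet_defect P Q L \<alpha> =
     (\<Sum>A\<in>\<alpha>. \<bar>measure P A - min (measure P A) (L * measure Q A)\<bar>)"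

end

theory Submission imports Defs begin

lemma approx_algebra:
  assumes M: "finite_measure M" and alg: "algebra (space M) G" and GM: "G \<subseteq> sets M"
    and S: "S \<in> sigma_sets (space M) G"
  shows "\<forall>e>0. \<exists>F\<in>G. measure M ((S - F) \<union> (F - S)) < e"
proof -
  interpret finite_measure M by fact
  interpret alg: algebra "space M" G by fact
  have SS: "sigma_sets (space M) G \<subseteq> sets M"
    using GM by (simp add: sets.sigma_sets_subset)
  show ?thesis using alg.Int_stable alg.space_closed S
  proof (induction rule: sigma_sets_induct_disjoint)
    case (basic A)
    then show ?case by (intro allI impI bexI[of _ A]) auto
  next
    case empty
    then show ?case by (intro allI impI bexI[of _ "{}"]) auto
  next
    case (compl A)
    show ?case
    proof (intro allI impI)
      fix e :: real assume "e > 0"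
      then obtain F where F: "F \<in> G" "measure M ((A - F) \<union> (F - A)) < e" using compl by blast
      have "space M - F \<in> G" using F by auto
      moreover have "((space M - A) - (space M - F)) \<union> ((space M - F) - (space M - A)) = (A - F) \<union> (F - A)"
      proof -
        have "A \<subseteq> space M" using sigma_sets_into_sp[OF alg.space_closed compl(1)] .
        moreover have "F \<subseteq> space M" using F(1) alg.space_closed by auto
        ultimately show ?thesis by auto
      qed
      ultimately show "\<exists>F'\<in>G. measure M ((space M - A - F') \<union> (F' - (space M - A))) < e"
        using F by metis
    qed
  next
    case (union A)
    show ?case
    proof (intro allI impI)
      fix e :: real assume e: "e > 0"
      define B where "B N = (\<Union>i<N. A i)" for N
      have Asets: "A i \<in> sets M" for i using union SS by blast
      have Bsets: "B N \<in> sets M" for N unfolding B_def using Asets by auto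
      have "(\<Union>N. B N) = (\<Union>i. A i)" unfolding B_def by auto
      moreover have "(\<lambda>N. measure M (B N)) \<longlonglongrightarrow> measure M (\<Union>N. B N)"
        proof (rule finite_Lim_measure_incseq)
          show "range B \<subseteq> sets M" using Bsets by auto
          show "incseq B" unfolding B_def incseq_def by (intro allI impI UN_mono) auto
        qed
      ultimately have lim: "(\<lambda>N. measure M (B N)) \<longlonglongrightarrow> measure M (\<Union>i. A i)" by simp
      then obtain N where N: "\<bar>measure M (B N) - measure M (\<Union>i. A i)\<bar> < e/2"
      proof -
        have "e/2 > 0" using e by simp
        from LIMSEQ_D[OF lim this] obtain N0 where "\<forall>n\<ge>N0. norm (measure M (B n) - measure M (\<Union>i. A i)) < e/2" by blast
        then show ?thesis using that by auto
      qed
      have "\<forall>i. \<exists>F. F \<in> G \<and> measure M ((A i - F) \<union> (F - A i)) < e / (2 * (real N + 1))"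
        using union(3) e by (simp add: Bex_def)
      then have "\<exists>F. \<forall>i. F i \<in> G \<and> measure M ((A i - F i) \<union> (F i - A i)) < e / (2 * (real N + 1))"
        by (rule choice)
      then obtain F where F0: "\<forall>i. F i \<in> G \<and> measure M ((A i - F i) \<union> (F i - A i)) < e / (2 * (real N + 1))"
        by blast
      have F: "\<And>i. F i \<in> G" "\<And>i. measure M ((A i - F i) \<union> (F i - A i)) < e / (2 * (real N + 1))"
        using F0 by auto
      define FF where "FF = (\<Union>i<N. F i)"
      have FFG: "FF \<in> G" unfolding FF_def using F(1) by (intro alg.finite_UN) auto
      have Fsets: "F i \<in> sets M" for i using F(1) GM by blast
      have sub: "((\<Union>i. A i) - FF) \<union> (FF - (\<Union>i. A i)) \<subseteq> ((\<Union>i. A i) - B N) \<union> (\<Union>i<N. (A i - F i) \<union> (F i - A i))"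
        unfolding FF_def B_def by auto
      have "measure M (((\<Union>i. A i) - FF) \<union> (FF - (\<Union>i. A i))) \<le> measure M (((\<Union>i. A i) - B N) \<union> (\<Union>i<N. (A i - F i) \<union> (F i - A i)))"
        by (rule finite_measure_mono[OF sub]) (use Asets Fsets Bsets in auto)
      also have "\<dots> \<le> measure M ((\<Union>i. A i) - B N) + measure M (\<Union>i<N. (A i - F i) \<union> (F i - A i))"
        by (rule measure_Un_le) (use Asets Fsets Bsets in auto)
      also have "measure M ((\<Union>i. A i) - B N) = measure M (\<Union>i. A i) - measure M (B N)"
        by (rule finite_measure_Diff) (use Asets Bsets in \<open>auto simp: B_def\<close>)
      also have "measure M (\<Union>i<N. (A i - F i) \<union> (F i - A i)) \<le> (\<Sum>i<N. measure M ((A i - F i) \<union> (F i - A i)))"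
        by (rule finite_measure_subadditive_finite) (use Asets Fsets in auto)
      also have "\<dots> \<le> (\<Sum>i<N. e / (2 * (real N + 1)))"
        by (intro sum_mono less_imp_le F(2))
      also have "\<dots> = real N * e / (2 * (real N + 1))" by simp
      also have "\<dots> \<le> e / 2"
        using e by (simp add: field_simps)
      finally have "measure M (((\<Union>i. A i) - FF) \<union> (FF - (\<Union>i. A i))) < e"
        using N by linarith
      then show "\<exists>F\<in>G. measure M (((\<Union>i. A i) - F) \<union> (F - (\<Union>i. A i))) < e"
        using FFG by blast
    qed
  qed
qed


lemma bpD:
  assumes "borel_partition \<alpha>"
  shows "finite \<alpha>" "\<And>A. A \<in> \<alpha> \<Longrightarrow> A \<in> sets borel" "\<And>A B. A \<in> \<alpha> \<Longrightarrow> B \<in> \<alpha> \<Longrightarrow> A \<noteq> B \<Longrightarrow> A \<inter> B = {}"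
    "\<Union>\<alpha> = UNIV"
  using assms unfolding borel_partition_def disjoint_def by auto

lemma part_refine_union:
  assumes a: "borel_partition \<alpha>" and c: "borel_partition \<gamma>" and r: "refines \<gamma> \<alpha>" and B: "B \<subseteq> \<alpha>"
  shows "\<Union>B = \<Union>{C\<in>\<gamma>. \<exists>A\<in>B. C \<subseteq> A}"
proof
  show "\<Union>{C\<in>\<gamma>. \<exists>A\<in>B. C \<subseteq> A} \<subseteq> \<Union>B" by blast
  show "\<Union>B \<subseteq> \<Union>{C\<in>\<gamma>. \<exists>A\<in>B. C \<subseteq> A}"
  proof
    fix x assume "x \<in> \<Union>B"
    then obtain A where A: "A \<in> B" "x \<in> A" by blast
    have "x \<in> \<Union>\<gamma>" using bpD(4)[OF c] by auto
    then obtain C where C: "C \<in> \<gamma>" "x \<in> C" by blast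
    then obtain A' where A': "A' \<in> \<alpha>" "C \<subseteq> A'" using r unfolding refines_def by blast
    have "A \<in> \<alpha>" using A B by blast
    have "x \<in> A \<inter> A'" using A A' C by blast
    then have "A = A'" using bpD(3)[OF a \<open>A \<in> \<alpha>\<close> A'(1)] by blast
    then show "x \<in> \<Union>{C\<in>\<gamma>. \<exists>A\<in>B. C \<subseteq> A}" using A C A' by blast
  qed
qed

lemma part_algebra:
  assumes parts: "\<forall>\<alpha>\<in>\<A>. borel_partition \<alpha>" and dir: "directed_refinement \<A>"
  shows "algebra UNIV {\<Union>B | B \<alpha>. \<alpha> \<in> \<A> \<and> B \<subseteq> \<alpha>}"
  unfolding algebra_iff_Un
proof (intro conjI ballI)
  show "{\<Union>B | B \<alpha>. \<alpha> \<in> \<A> \<and> B \<subseteq> \<alpha>} \<subseteq> Pow UNIV" by auto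
  obtain \<alpha>0 where "\<alpha>0 \<in> \<A>" using dir unfolding directed_refinement_def by blast
  then show "{} \<in> {\<Union>B | B \<alpha>. \<alpha> \<in> \<A> \<and> B \<subseteq> \<alpha>}" by (intro CollectI exI[of _ "{}"] exI[of _ \<alpha>0]) auto
next
  fix a assume "a \<in> {\<Union>B | B \<alpha>. \<alpha> \<in> \<A> \<and> B \<subseteq> \<alpha>}"
  then obtain B \<alpha> where B: "a = \<Union>B" "\<alpha> \<in> \<A>" "B \<subseteq> \<alpha>" by blast
  have p: "borel_partition \<alpha>" using parts B by blast
  have "UNIV - \<Union>B = \<Union>(\<alpha> - B)"
  proof
    show "UNIV - \<Union>B \<subseteq> \<Union>(\<alpha> - B)" using bpD(4)[OF p] by blast
    show "\<Union>(\<alpha> - B) \<subseteq> UNIV - \<Union>B"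
    proof
      fix x assume "x \<in> \<Union>(\<alpha> - B)"
      then obtain C where C: "C \<in> \<alpha>" "C \<notin> B" "x \<in> C" by blast
      have "x \<notin> A" if "A \<in> B" for A
        using bpD(3)[OF p C(1), of A] that B(3) C by blast
      then show "x \<in> UNIV - \<Union>B" by blast
    qed
  qed
  then show "UNIV - a \<in> {\<Union>B | B \<alpha>. \<alpha> \<in> \<A> \<and> B \<subseteq> \<alpha>}" using B by blast
next
  fix a b assume "a \<in> {\<Union>B | B \<alpha>. \<alpha> \<in> \<A> \<and> B \<subseteq> \<alpha>}" "b \<in> {\<Union>B | B \<alpha>. \<alpha> \<in> \<A> \<and> B \<subseteq> \<alpha>}"
  then obtain B1 \<alpha>1 B2 \<alpha>2 where B: "a = \<Union>B1" "\<alpha>1 \<in> \<A>" "B1 \<subseteq> \<alpha>1" "b = \<Union>B2" "\<alpha>2 \<in> \<A>" "B2 \<subseteq> \<alpha>2" by blast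
  obtain \<gamma> where g: "\<gamma> \<in> \<A>" "refines \<gamma> \<alpha>1" "refines \<gamma> \<alpha>2"
    using dir B unfolding directed_refinement_def by blast
  have "a = \<Union>{C\<in>\<gamma>. \<exists>A\<in>B1. C \<subseteq> A}"
    using part_refine_union[of \<alpha>1 \<gamma> B1] B(1,2,3) g parts by simp
  moreover have "b = \<Union>{C\<in>\<gamma>. \<exists>A\<in>B2. C \<subseteq> A}"
    using part_refine_union[of \<alpha>2 \<gamma> B2] B(4,5,6) g parts by simp
  ultimately have "a \<union> b = \<Union>({C\<in>\<gamma>. \<exists>A\<in>B1. C \<subseteq> A} \<union> {C\<in>\<gamma>. \<exists>A\<in>B2. C \<subseteq> A})" by (simp only: Union_Un_distrib)
  moreover have "{C\<in>\<gamma>. \<exists>A\<in>B1. C \<subseteq> A} \<union> {C\<in>\<gamma>. \<exists>A\<in>B2. C \<subseteq> A} \<subseteq> \<gamma>" by blast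
  ultimately show "a \<union> b \<in> {\<Union>B | B \<alpha>. \<alpha> \<in> \<A> \<and> B \<subseteq> \<alpha>}" using g(1) by blast
qed

lemma part_G_borel:
  assumes parts: "\<forall>\<alpha>\<in>\<A>. borel_partition \<alpha>"
  shows "{\<Union>B | B \<alpha>. \<alpha> \<in> \<A> \<and> B \<subseteq> \<alpha>} \<subseteq> sets borel"
proof
  fix a assume "a \<in> {\<Union>B | B \<alpha>. \<alpha> \<in> \<A> \<and> B \<subseteq> \<alpha>}"
  then obtain B \<alpha> where B: "a = \<Union>B" "\<alpha> \<in> \<A>" "B \<subseteq> \<alpha>" by blast
  have p: "borel_partition \<alpha>" using parts B by blast
  have "finite B" using bpD(1)[OF p] B(3) finite_subset by blast
  moreover have "B \<subseteq> sets borel" using bpD(2)[OF p] B(3) by blast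
  ultimately show "a \<in> sets borel" using B(1) by auto
qed

lemma part_borel_sub:
  assumes res: "resolves \<A>"
  shows "sets borel \<subseteq> sigma_sets UNIV {\<Union>B | B \<alpha>. \<alpha> \<in> \<A> \<and> B \<subseteq> \<alpha>}"
proof -
  have "\<Union>\<A> \<subseteq> {\<Union>B | B \<alpha>. \<alpha> \<in> \<A> \<and> B \<subseteq> \<alpha>}"
  proof
    fix A assume "A \<in> \<Union>\<A>"
    then obtain \<alpha> where "\<alpha> \<in> \<A>" "A \<in> \<alpha>" by blast
    then show "A \<in> {\<Union>B | B \<alpha>. \<alpha> \<in> \<A> \<and> B \<subseteq> \<alpha>}" by (intro CollectI exI[of _ "{A}"] exI[of _ \<alpha>]) auto
  qed
  then have "sigma_sets UNIV (\<Union>\<A>) \<subseteq> sigma_sets UNIV {\<Union>B | B \<alpha>. \<alpha> \<in> \<A> \<and> B \<subseteq> \<alpha>}"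
    by (rule sigma_sets_mono')
  then show ?thesis using res unfolding resolves_def by simp
qed


lemma enn_sub1:
  assumes "ennreal a \<le> X + ennreal b" "b \<ge> 0"
  shows "ennreal (a - b) \<le> X"
proof -
  have "ennreal a - ennreal b \<le> X" using assms by (simp add: ennreal_minus_le_iff add.commute)
  then show ?thesis using assms(2) by (simp add: ennreal_minus)
qed

lemma enn_sub2:
  assumes "X + ennreal b \<le> ennreal a" "b \<ge> 0"
  shows "X \<le> ennreal (a - b)"
proof -
  have "X \<le> ennreal a - ennreal b" using assms by (simp add: ennreal_le_minus_iff)
  then show ?thesis using assms(2) by (simp add: ennreal_minus)
qed

lemma pw1:
  assumes "(q::ennreal) \<noteq> \<infinity>" "(L::real) > 0"
  shows "q \<le> ennreal (max 0 (enn2real q - L)) + ennreal L"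
proof -
  have "q = ennreal (enn2real q)" using assms(1) by (simp add: ennreal_enn2real_if)
  also have "\<dots> \<le> ennreal (max 0 (enn2real q - L) + L)" by (intro ennreal_leI) auto
  also have "\<dots> = ennreal (max 0 (enn2real q - L)) + ennreal L" using assms by (simp add: ennreal_plus)
  finally show ?thesis .
qed

lemma pw2:
  assumes "(q::ennreal) \<noteq> \<infinity>" "(L::real) > 0" "L < enn2real q"
  shows "ennreal (max 0 (enn2real q - L)) + ennreal L = q"
proof -
  have "ennreal (max 0 (enn2real q - L)) + ennreal L = ennreal (max 0 (enn2real q - L) + L)"
    by (rule ennreal_plus[symmetric]) (use assms in auto)
  also have "\<dots> = ennreal (enn2real q)" using assms by (simp add: max_def)
  also have "\<dots> = q" using assms(1) by (simp add: ennreal_enn2real_if)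
  finally show ?thesis .
qed

lemma ind_sum_partition:
  assumes p: "borel_partition \<alpha>"
  shows "(\<Sum>A\<in>\<alpha>. indicator A x :: ennreal) = 1"
proof -
  obtain A0 where A0: "A0 \<in> \<alpha>" "x \<in> A0" using bpD(4)[OF p] by blast
  have "(\<Sum>A\<in>\<alpha>. indicator A x :: ennreal) = indicator A0 x + (\<Sum>A\<in>\<alpha> - {A0}. indicator A x)"
    using A0 bpD(1)[OF p] by (simp add: sum.remove)
  also have "(\<Sum>A\<in>\<alpha> - {A0}. indicator A x :: ennreal) = 0"
  proof (intro sum.neutral ballI)
    fix A assume "A \<in> \<alpha> - {A0}"
    then have "x \<notin> A" using bpD(3)[OF p, of A A0] A0 by blast
    then show "indicator A x = (0::ennreal)" by simp
  qed
  finally show ?thesis using A0 by simp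
qed


theorem mainTheorem3:
  fixes \<A> :: "'a::t2_space set set set"
    and P Q :: "'a measure" and L :: real
  assumes parts: "\<forall>\<alpha>\<in>\<A>. borel_partition \<alpha>"
    and dir: "directed_refinement \<A>"
    and res: "resolves \<A>"
    and P: "prob_space P" "sets P = sets borel"
    and Q: "prob_space Q" "sets Q = sets borel"
    and ac: "absolutely_continuous Q P"
    and L: "L > 0"
  shows "meet_defect P Q L = (SUP \<alpha>\<in>\<A>. ennreal (hist_meet_defect P Q L \<alpha>))
    \<and> (SUP \<alpha>\<in>\<A>. ennreal (hist_meet_defect P Q L \<alpha>))
        = (SUP \<alpha>\<in>\<A>. ennreal (\<Sum>A\<in>\<alpha>. max 0 (measure P A - L * measure Q A)))"
proof -
  interpret P: prob_space P by fact
  interpret Q: prob_space Q by fact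
  define h where "h \<alpha> = (\<Sum>A\<in>\<alpha>. max 0 (measure P A - L * measure Q A))" for \<alpha>
  have hist: "hist_meet_defect P Q L \<alpha> = h \<alpha>" for \<alpha>
    unfolding hist_meet_defect_def h_def by (intro sum.cong) (auto simp: min_def max_def)
  have h0: "h \<alpha> \<ge> 0" for \<alpha> unfolding h_def by (intro sum_nonneg) auto
  define p where "p = RN_deriv Q P"
  define f where "f x = ennreal (max 0 (enn2real (p x) - L))" for x
  have sPQ: "sets P = sets Q" using P Q by simp
  have spQ: "space Q = UNIV" using Q(2) by (metis sets_eq_imp_space_eq space_borel)
  have pm[measurable]: "p \<in> borel_measurable Q" unfolding p_def by simp
  have fm[measurable]: "f \<in> borel_measurable Q" unfolding f_def by measurable
  have dens: "density Q p = P" unfolding p_def by (rule Q.density_RN_deriv[OF ac sPQ])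
  have emP: "emeasure P A = (\<integral>\<^sup>+x. p x * indicator A x \<partial>Q)" if "A \<in> sets borel" for A
    using that Q(2) by (metis dens emeasure_density pm)
  have "sigma_finite_measure P" by unfold_locales
  then have fin: "AE x in Q. p x \<noteq> \<infinity>" unfolding p_def by (rule Q.RN_deriv_finite[OF _ ac sPQ])
  have md: "meet_defect P Q L = (\<integral>\<^sup>+x. f x \<partial>Q)" unfolding meet_defect_def f_def p_def ..

  have cell: "ennreal (max 0 (measure P A - L * measure Q A)) \<le> (\<integral>\<^sup>+x. f x * indicator A x \<partial>Q)"
    if A: "A \<in> sets borel" for A
  proof (cases "measure P A \<le> L * measure Q A")
    case True then show ?thesis by simp
  next
    case False
    have AQ[measurable]: "A \<in> sets Q" using A Q(2) by simp
    have "ennreal (measure P A) = emeasure P A" by (simp add: P.emeasure_eq_measure)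
    also have "\<dots> = (\<integral>\<^sup>+x. p x * indicator A x \<partial>Q)" by (rule emP[OF A])
    also have "\<dots> \<le> (\<integral>\<^sup>+x. (f x + ennreal L) * indicator A x \<partial>Q)"
    proof (rule nn_integral_mono_AE)
      show "AE x in Q. p x * indicator A x \<le> (f x + ennreal L) * indicator A x"
        using fin
      proof eventually_elim
        case (elim x)
        show ?case unfolding f_def using pw1[OF elim L] by (intro mult_right_mono) auto
      qed
    qed
    also have "\<dots> = (\<integral>\<^sup>+x. f x * indicator A x \<partial>Q) + (\<integral>\<^sup>+x. ennreal L * indicator A x \<partial>Q)"
      by (simp add: distrib_right nn_integral_add)
    also have "(\<integral>\<^sup>+x. ennreal L * indicator A x \<partial>Q) = ennreal (L * measure Q A)"
      using L by (simp add: nn_integral_cmult_indicator Q.emeasure_eq_measure ennreal_mult)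
    finally have "ennreal (measure P A - L * measure Q A) \<le> (\<integral>\<^sup>+x. f x * indicator A x \<partial>Q)"
      by (rule enn_sub1) (use L in simp)
    then show ?thesis using False by simp
  qed

  have lower: "ennreal (h \<alpha>) \<le> meet_defect P Q L" if a: "\<alpha> \<in> \<A>" for \<alpha>
  proof -
    have p: "borel_partition \<alpha>" using parts a by blast
    have "ennreal (h \<alpha>) = (\<Sum>A\<in>\<alpha>. ennreal (max 0 (measure P A - L * measure Q A)))"
      unfolding h_def by (rule sum_ennreal[symmetric]) simp
    also have "\<dots> \<le> (\<Sum>A\<in>\<alpha>. (\<integral>\<^sup>+x. f x * indicator A x \<partial>Q))"
      by (intro sum_mono cell bpD(2)[OF p])
    also have "\<dots> = (\<integral>\<^sup>+x. (\<Sum>A\<in>\<alpha>. f x * indicator A x) \<partial>Q)"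
    proof (rule nn_integral_sum[symmetric])
      fix A assume "A \<in> \<alpha>"
      then have "A \<in> sets Q" using bpD(2)[OF p] Q(2) by simp
      then show "(\<lambda>x. f x * indicator A x) \<in> borel_measurable Q" by measurable
    qed
    also have "\<dots> = (\<integral>\<^sup>+x. f x \<partial>Q)"
      by (simp add: sum_distrib_left[symmetric] ind_sum_partition[OF p])
    finally show ?thesis using md by simp
  qed

  define S where "S = {x. L < enn2real (p x)}"
  have "{x\<in>space Q. L < enn2real (p x)} \<in> sets Q" by measurable
  then have SQ[measurable]: "S \<in> sets Q" unfolding S_def using spQ by simp
  have SB: "S \<in> sets borel" using SQ Q(2) by simp
  have md_le: "meet_defect P Q L \<le> ennreal (measure P S - L * measure Q S)"
  proof -
    have "(\<integral>\<^sup>+x. f x \<partial>Q) = (\<integral>\<^sup>+x. f x * indicator S x \<partial>Q)"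
      by (intro nn_integral_cong) (auto simp: f_def S_def indicator_def max_def)
    moreover have "(\<integral>\<^sup>+x. f x * indicator S x \<partial>Q) + ennreal (L * measure Q S) = ennreal (measure P S)"
    proof -
      have "(\<integral>\<^sup>+x. f x * indicator S x \<partial>Q) + ennreal (L * measure Q S)
          = (\<integral>\<^sup>+x. f x * indicator S x \<partial>Q) + (\<integral>\<^sup>+x. ennreal L * indicator S x \<partial>Q)"
        using L by (simp add: nn_integral_cmult_indicator Q.emeasure_eq_measure ennreal_mult)
      also have "\<dots> = (\<integral>\<^sup>+x. (f x + ennreal L) * indicator S x \<partial>Q)"
        by (simp add: distrib_right nn_integral_add)
      also have "\<dots> = (\<integral>\<^sup>+x. p x * indicator S x \<partial>Q)"
      proof (rule nn_integral_cong_AE)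
        show "AE x in Q. (f x + ennreal L) * indicator S x = p x * indicator S x"
          using fin
        proof eventually_elim
          case (elim x)
          show ?case
          proof (cases "x \<in> S")
            case True
            then show ?thesis unfolding f_def using pw2[OF elim L] by (simp add: S_def)
          qed simp
        qed
      qed
      also have "\<dots> = ennreal (measure P S)" using emP[OF SB] by (simp add: P.emeasure_eq_measure)
      finally show ?thesis .
    qed
    ultimately show ?thesis unfolding md by (intro enn_sub2) (auto simp: L less_imp_le)
  qed

  define G where "G = {\<Union>B | B \<alpha>. \<alpha> \<in> \<A> \<and> B \<subseteq> \<alpha>}"
  define \<mu> where "\<mu> = density Q (\<lambda>x. 1 + p x)"
  have smu: "sets \<mu> = sets borel" unfolding \<mu>_def using Q(2) by simp
  have spmu: "space \<mu> = UNIV" unfolding \<mu>_def using spQ by simp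
  have emu: "emeasure \<mu> T = emeasure Q T + emeasure P T" if "T \<in> sets borel" for T
  proof -
    have T: "T \<in> sets Q" using that Q(2) by simp
    have "emeasure (density Q (\<lambda>_. 1)) T + emeasure (density Q p) T = emeasure \<mu> T"
      unfolding \<mu>_def by (rule emeasure_density_add[OF T]) auto
    then show ?thesis using T by (simp add: emeasure_density_const dens)
  qed
  have mmu: "measure \<mu> T = measure Q T + measure P T" if "T \<in> sets borel" for T
    using emu[OF that] by (intro measure_eq_emeasure_eq_ennreal)
      (auto simp: Q.emeasure_eq_measure P.emeasure_eq_measure ennreal_plus)
  have fmu: "finite_measure \<mu>"
    by (rule finite_measureI) (simp add: spmu emu)
  have apx: "\<forall>e>0. \<exists>F\<in>G. measure \<mu> ((S - F) \<union> (F - S)) < e"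
  proof (rule approx_algebra[OF fmu])
    show "algebra (space \<mu>) G" unfolding spmu G_def by (rule part_algebra[OF parts dir])
    show "G \<subseteq> sets \<mu>" unfolding smu G_def by (rule part_G_borel[OF parts])
    show "S \<in> sigma_sets (space \<mu>) G" unfolding spmu G_def using part_borel_sub[OF res] SB by blast
  qed

  have upper: "ennreal (measure P S - L * measure Q S) \<le> (SUP \<alpha>\<in>\<A>. ennreal (h \<alpha>))"
  proof (rule ennreal_le_epsilon)
    fix e :: real assume e: "0 < e"
    then have "e / (1 + L) > 0" using L by simp
    then obtain F where F: "F \<in> G" "measure \<mu> ((S - F) \<union> (F - S)) < e / (1 + L)" using apx by blast
    obtain B \<alpha> where B: "F = \<Union>B" "\<alpha> \<in> \<A>" "B \<subseteq> \<alpha>" using F(1) unfolding G_def by blast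
    have p: "borel_partition \<alpha>" using parts B by blast
    have FB: "F \<in> sets borel" using F(1) part_G_borel[OF parts] unfolding G_def by blast
    define D where "D = (S - F) \<union> (F - S)"
    have DB: "D \<in> sets borel" unfolding D_def using FB SB by auto
    have PS: "measure P S \<le> measure P F + measure P D"
    proof -
      have "measure P S \<le> measure P (F \<union> D)"
        by (rule P.finite_measure_mono) (use FB DB P(2) in \<open>auto simp: D_def\<close>)
      also have "\<dots> \<le> measure P F + measure P D"
        by (rule measure_Un_le) (use FB DB P(2) in auto)
      finally show ?thesis .
    qed
    have QF: "measure Q F \<le> measure Q S + measure Q D"
    proof -
      have "measure Q F \<le> measure Q (S \<union> D)"
        by (rule Q.finite_measure_mono) (use SB DB Q(2) in \<open>auto simp: D_def\<close>)
      also have "\<dots> \<le> measure Q S + measure Q D"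
        by (rule measure_Un_le) (use SB DB Q(2) in auto)
      finally show ?thesis .
    qed
    have muD: "measure Q D + measure P D < e / (1 + L)" using F(2) mmu[OF DB] unfolding D_def by simp
    have "measure Q D \<ge> 0" "measure P D \<ge> 0" by auto
    have err: "measure P D + L * measure Q D < e"
    proof -
      have "measure P D + L * measure Q D \<le> measure P D + L * measure Q D + measure Q D" by simp
      also have "\<dots> \<le> (1 + L) * (measure Q D + measure P D)"
        using \<open>measure Q D \<ge> 0\<close> \<open>measure P D \<ge> 0\<close> L by (simp add: algebra_simps)
      also have "\<dots> < (1 + L) * (e / (1 + L))" using muD L by (intro mult_strict_left_mono) auto
      also have "\<dots> = e" using L by simp
      finally show ?thesis .
    qed
    have disj: "disjoint_family_on (\<lambda>A. A) B"
      unfolding disjoint_family_on_def using bpD(3)[OF p] B(3) by blast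
    have Bfin: "finite B" using bpD(1)[OF p] B(3) finite_subset by blast
    have Bsets: "B \<subseteq> sets borel" using bpD(2)[OF p] B(3) by blast
    have PF: "measure P F = (\<Sum>A\<in>B. measure P A)"
      using P.finite_measure_finite_Union[OF Bfin _ disj] Bsets P(2) B(1) by auto
    have QF': "measure Q F = (\<Sum>A\<in>B. measure Q A)"
      using Q.finite_measure_finite_Union[OF Bfin _ disj] Bsets Q(2) B(1) by auto
    have "measure P F - L * measure Q F = (\<Sum>A\<in>B. measure P A - L * measure Q A)"
      unfolding PF QF' by (simp add: sum_subtractf sum_distrib_left)
    also have "\<dots> \<le> (\<Sum>A\<in>B. max 0 (measure P A - L * measure Q A))" by (intro sum_mono) auto
    also have "\<dots> \<le> h \<alpha>" unfolding h_def
      by (intro sum_mono2 bpD(1)[OF p] B(3)) auto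
    finally have hF: "measure P F - L * measure Q F \<le> h \<alpha>" .
    have "measure P S - L * measure Q S \<le> measure P F - L * measure Q F + (measure P D + L * measure Q D)"
    proof -
      have "L * measure Q F \<le> L * (measure Q S + measure Q D)" using QF L by (intro mult_left_mono) auto
      then show ?thesis using PS by (simp add: algebra_simps)
    qed
    then have "measure P S - L * measure Q S \<le> h \<alpha> + e" using hF err by linarith
    then have "ennreal (measure P S - L * measure Q S) \<le> ennreal (h \<alpha> + e)" by (rule ennreal_leI)
    also have "\<dots> = ennreal (h \<alpha>) + ennreal e" using h0 e by (simp add: ennreal_plus)
    also have "\<dots> \<le> (SUP \<alpha>\<in>\<A>. ennreal (h \<alpha>)) + ennreal e"
      using B(2) by (intro add_right_mono SUP_upper)
    finally show "ennreal (measure P S - L * measure Q S) \<le> (SUP \<alpha>\<in>\<A>. ennreal (h \<alpha>)) + ennreal e" .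
  qed

  have "meet_defect P Q L = (SUP \<alpha>\<in>\<A>. ennreal (h \<alpha>))"
  proof (rule antisym)
    show "meet_defect P Q L \<le> (SUP \<alpha>\<in>\<A>. ennreal (h \<alpha>))" using md_le upper by (rule order_trans)
    show "(SUP \<alpha>\<in>\<A>. ennreal (h \<alpha>)) \<le> meet_defect P Q L" using lower by (rule SUP_least)
  qed
  then show ?thesis unfolding hist h_def by simp
qed

end
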